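(* Let $(C,d_1+\cdots+d_k)$ be a finite-dimensional graded chain complex over a field, where $d_i$ raises the grading by $i$ (so the grading induces a filtration), and suppose its total homology is trivial. Suppose $C$ is concentrated in three adjacent gradings with graded pieces $C_1,C_2,C_3$ satisfying $\dim(C_2)=\dim(C_1)+\dim(C_3)$. Then $H_*(C,d_1)=0$. *)

theory Defs
  imports Complex_Main
begin

definition fin_dim_subspace :: "('k::field \<Rightarrow> 'v::ab_group_add \<Rightarrow> 'v) \<Rightarrow> 'v set \<Rightarrow> bool" where
  "fin_dim_subspace scale S \<longleftrightarrow>
     module.subspace scale S \<and> (\<exists>B. finite B \<and> B \<subseteq> S \<and> module.span scale B = S)"

definition direct_sum3 :: "'v::ab_group_add set \<Rightarrow> 'v set \<Rightarrow> 'v set \<Rightarrow> 'v set" where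
  "direct_sum3 C1 C2 C3 = {x1 + x2 + x3 | x1 x2 x3. x1 \<in> C1 \<and> x2 \<in> C2 \<and> x3 \<in> C3}"

definition independent3 :: "'v::ab_group_add set \<Rightarrow> 'v set \<Rightarrow> 'v set \<Rightarrow> bool" where
  "independent3 C1 C2 C3 \<longleftrightarrow>
     (\<forall>x1\<in>C1. \<forall>x2\<in>C2. \<forall>x3\<in>C3. x1 + x2 + x3 = 0 \<longrightarrow> x1 = 0 \<and> x2 = 0 \<and> x3 = 0)"

definition homology_trivial :: "'v::ab_group_add set \<Rightarrow> ('v \<Rightarrow> 'v) \<Rightarrow> bool" where
  "homology_trivial C d \<longleftrightarrow> (\<forall>x\<in>C. d x = 0 \<longrightarrow> (\<exists>y\<in>C. d y = x))"

end

theory Submission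
  imports Defs
begin
lemma (in vector_space) indep_card_le:
  assumes "finite B0" "S \<subseteq> span B0" "T \<subseteq> S" "independent T"
  shows "finite T \<and> card T \<le> dim S"
proof -
  obtain B where B: "B \<subseteq> S" "independent B" "S \<subseteq> span B" "card B = dim S" by (rule basis_exists)
  have "finite B" using independent_span_bound[OF assms(1) B(2)] B(1) assms(2) by auto
  then show ?thesis using independent_span_bound[OF \<open>finite B\<close> assms(4)] assms(3) B by auto
qed

lemma (in vector_space) span_disjoint_zero:
  assumes "finite R" "finite K" "R \<inter> K = {}" "independent (R \<union> K)" "x \<in> span R" "x \<in> span K"
  shows "x = 0"
proof -
  obtain u where u: "x = (\<Sum>v\<in>R. u v *s v)" using assms(1,5) span_finite by auto
  obtain w where w: "x = (\<Sum>v\<in>K. w v *s v)" using assms(2,6) span_finite by auto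
  define c where "c v = (if v \<in> R then u v else - w v)" for v
  have "(\<Sum>v\<in>R\<union>K. c v *s v) = (\<Sum>v\<in>R. c v *s v) + (\<Sum>v\<in>K. c v *s v)"
    by (rule sum.union_disjoint) (use assms in auto)
  also have "(\<Sum>v\<in>R. c v *s v) = x" using u by (simp add: c_def)
  also have "(\<Sum>v\<in>K. c v *s v) = (\<Sum>v\<in>K. - (w v *s v))"
    by (rule sum.cong) (use assms(3) in \<open>auto simp: c_def scale_minus_left\<close>)
  also have "\<dots> = - x" using w by (simp add: sum_negf)
  finally have z: "(\<Sum>v\<in>R\<union>K. c v *s v) = 0" by simp
  have "\<forall>v\<in>R. u v = 0"
  proof
    fix v assume "v \<in> R"
    then have "c v = 0" using independentD[OF assms(4) _ _ z] assms(1,2) by auto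
    then show "u v = 0" using \<open>v \<in> R\<close> by (simp add: c_def)
  qed
  then show ?thesis using u by simp
qed

lemma rank_nullity_sub:
  assumes vs: "vector_space scale" and lin: "Vector_Spaces.linear scale scale f"
    and S: "module.subspace scale S" and B0: "finite B0" "B0 \<subseteq> S" "module.span scale B0 = S"
  shows "vector_space.dim scale S = vector_space.dim scale {x\<in>S. f x = 0} + vector_space.dim scale (f ` S)"
proof -
  interpret v: vector_space scale by (rule vs)
  interpret l: Vector_Spaces.linear scale scale f by (rule lin)
  define K where "K = {x\<in>S. f x = 0}"
  have "K = S \<inter> {x. f x = 0}" unfolding K_def by auto
  then have Ksub: "v.subspace K" using v.subspace_inter[OF S l.subspace_kernel] by simp
  obtain BK where BK: "BK \<subseteq> K" "v.independent BK" "K \<subseteq> v.span BK" "card BK = v.dim K"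
    by (rule v.basis_exists)
  have "BK \<subseteq> S" using BK(1) K_def by auto
  then obtain B where B: "BK \<subseteq> B" "B \<subseteq> S" "v.independent B" "S \<subseteq> v.span B"
    using v.maximal_independent_subset_extend[of BK S] BK(2) by blast
  have fB: "finite B" using v.indep_card_le[of B0 S B] B B0 by auto
  have cB: "card B = v.dim S" using v.basis_card_eq_dim B by auto
  have fBK: "finite BK" using fB B(1) finite_subset by auto
  define R where "R = B - BK"
  have fR: "finite R" using fB R_def by auto
  have spanS: "v.span B \<subseteq> S" using B(2) S v.span_minimal by auto
  have spanR: "v.span R \<subseteq> S" using spanS v.span_mono[of R B] R_def by auto
  have spanBK: "v.span BK \<subseteq> K" using BK(1) Ksub v.span_minimal by auto
  have BRK: "R \<union> BK = B" using R_def B(1) by auto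
  have inj: "inj_on f (v.span R)"
  proof (subst l.inj_on_iff_eq_0[OF v.subspace_span], intro ballI impI)
    fix x assume x: "x \<in> v.span R" "f x = 0"
    then have "x \<in> K" using spanR K_def by auto
    then have "x \<in> v.span BK" using BK(3) by auto
    then show "x = 0" using v.span_disjoint_zero[OF fR fBK _ _ x(1)] BRK B(3) R_def by auto
  qed
  have indR: "v.independent (f ` R)"
    using l.independent_injective_image[OF _ inj] v.independent_mono[OF B(3)] R_def by auto
  have injR: "inj_on f R" using inj_on_subset[OF inj v.span_superset] .
  have sp: "v.span (f ` R) = f ` S"
  proof -
    have "f ` v.span R = f ` S"
    proof
      show "f ` v.span R \<subseteq> f ` S" using spanR by auto
      show "f ` S \<subseteq> f ` v.span R"
      proof
        fix z assume "z \<in> f ` S"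
        then obtain y where y: "y \<in> S" "z = f y" by auto
        then have "y \<in> v.span (R \<union> BK)" using B(4) BRK by auto
        then obtain a b where ab: "y = a + b" "a \<in> v.span R" "b \<in> v.span BK"
          unfolding v.span_Un by auto
        have "f b = 0" using ab(3) spanBK K_def by auto
        then have "z = f a" using y ab l.add by simp
        then show "z \<in> f ` v.span R" using ab by auto
      qed
    qed
    then show ?thesis using l.span_image by simp
  qed
  have "v.dim (f ` S) = card R"
    using v.dim_span_eq_card_independent[OF indR] sp card_image[OF injR] by simp
  moreover have "card B = card R + card BK"
    using BRK fR fBK R_def card_Un_disjoint[of R BK] by auto
  ultimately show ?thesis using cB BK(4) K_def by simp
qed

theorem lemma4p10:
  fixes scale :: "'k::field \<Rightarrow> 'v::ab_group_add \<Rightarrow> 'v"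
    and C1 C2 C3 :: "'v set"
    and d1 d2 :: "'v \<Rightarrow> 'v"
  assumes vs: "vector_space scale"
    and fd1: "fin_dim_subspace scale C1"
    and fd2: "fin_dim_subspace scale C2"
    and fd3: "fin_dim_subspace scale C3"
    and indep: "independent3 C1 C2 C3"
    and lin1: "Vector_Spaces.linear scale scale d1"
    and lin2: "Vector_Spaces.linear scale scale d2"
    and d1_C1: "d1 ` C1 \<subseteq> C2"
    and d1_C2: "d1 ` C2 \<subseteq> C3"
    and d1_C3: "d1 ` C3 \<subseteq> {0}"
    and d2_C1: "d2 ` C1 \<subseteq> C3"
    and d2_C2: "d2 ` C2 \<subseteq> {0}"
    and d2_C3: "d2 ` C3 \<subseteq> {0}"
    and dd: "\<forall>x\<in>direct_sum3 C1 C2 C3. d1 (d1 x + d2 x) + d2 (d1 x + d2 x) = 0"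
    and total_acyclic: "homology_trivial (direct_sum3 C1 C2 C3) (\<lambda>x. d1 x + d2 x)"
    and dims: "vector_space.dim scale C2 = vector_space.dim scale C1 + vector_space.dim scale C3"
  shows "homology_trivial (direct_sum3 C1 C2 C3) d1"
proof -
  interpret v: vector_space scale by (rule vs)
  interpret l1: Vector_Spaces.linear scale scale d1 by (rule lin1)
  interpret l2: Vector_Spaces.linear scale scale d2 by (rule lin2)
  obtain B1 where S1: "v.subspace C1" "finite B1" "B1 \<subseteq> C1" "v.span B1 = C1"
    using fd1 unfolding fin_dim_subspace_def by blast
  obtain B2 where S2: "v.subspace C2" "finite B2" "B2 \<subseteq> C2" "v.span B2 = C2"
    using fd2 unfolding fin_dim_subspace_def by blast
  obtain B3 where S3: "v.subspace C3" "finite B3" "B3 \<subseteq> C3" "v.span B3 = C3"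
    using fd3 unfolding fin_dim_subspace_def by blast
  have z1: "0 \<in> C1" and z2: "0 \<in> C2" and z3: "0 \<in> C3"
    using S1 S2 S3 v.subspace_0 by auto
  define V where "V = direct_sum3 C1 C2 C3"
  have d1C3: "\<And>x. x \<in> C3 \<Longrightarrow> d1 x = 0" using d1_C3 by auto
  have d2C2: "\<And>x. x \<in> C2 \<Longrightarrow> d2 x = 0" using d2_C2 by auto
  have d2C3: "\<And>x. x \<in> C3 \<Longrightarrow> d2 x = 0" using d2_C3 by auto
  have dd1: "d1 (d1 y1) = 0" if y1: "y1 \<in> C1" for y1
  proof -
    have "y1 \<in> V" unfolding V_def direct_sum3_def using y1 z2 z3 by force
    then have "d1 (d1 y1 + d2 y1) + d2 (d1 y1 + d2 y1) = 0" using dd V_def by auto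
    moreover have "d1 y1 \<in> C2" "d2 y1 \<in> C3" using y1 d1_C1 d2_C1 by auto
    ultimately show ?thesis using l1.add l2.add d1C3 d2C2 d2C3 by simp
  qed
  have ex2: "\<exists>y1\<in>C1. d1 y1 = x2" if x2: "x2 \<in> C2" "d1 x2 = 0" for x2
  proof -
    have "x2 \<in> V" unfolding V_def direct_sum3_def using x2 z1 z3 by force
    moreover have "d1 x2 + d2 x2 = 0" using x2 d2C2 by simp
    ultimately obtain y where y: "y \<in> V" "d1 y + d2 y = x2"
      using total_acyclic unfolding homology_trivial_def V_def by blast
    then obtain y1 y2 y3 where yy: "y = y1 + y2 + y3" "y1 \<in> C1" "y2 \<in> C2" "y3 \<in> C3"
      unfolding V_def direct_sum3_def by blast
    have "d1 y + d2 y = d1 y1 + (d1 y2 + d2 y1)"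
      using yy l1.add l2.add d1C3 d2C2 d2C3 by (simp add: algebra_simps)
    then have e: "0 + (d1 y1 - x2) + (d1 y2 + d2 y1) = 0" using y(2) by (simp add: algebra_simps)
    have "d1 y1 - x2 \<in> C2" using v.subspace_diff[OF S2(1)] d1_C1 yy x2 by auto
    moreover have "d1 y2 + d2 y1 \<in> C3" using v.subspace_add[OF S3(1)] d1_C2 d2_C1 yy by (meson image_subset_iff)
    ultimately have "d1 y1 - x2 = 0" using indep e z1 unfolding independent3_def by blast
    then show ?thesis using yy by auto
  qed
  have K2: "{x\<in>C2. d1 x = 0} = d1 ` C1"
    using ex2 dd1 d1_C1 by blast
  have rn1: "v.dim C1 = v.dim {x\<in>C1. d1 x = 0} + v.dim (d1 ` C1)"
    by (rule rank_nullity_sub[OF vs lin1 S1])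
  have rn2: "v.dim C2 = v.dim (d1 ` C1) + v.dim (d1 ` C2)"
    using rank_nullity_sub[OF vs lin1 S2] K2 by simp
  obtain BB where BB: "BB \<subseteq> d1 ` C2" "v.independent BB" "d1 ` C2 \<subseteq> v.span BB" "card BB = v.dim (d1 ` C2)"
    by (rule v.basis_exists)
  have BBC3: "BB \<subseteq> C3" using BB(1) d1_C2 by auto
  have "finite BB \<and> card BB \<le> v.dim C3"
    using v.indep_card_le[of B3 C3 BB] S3 BBC3 BB(2) by auto
  then have fBB: "finite BB" and le: "v.dim (d1 ` C2) \<le> v.dim C3" using BB(4) by auto
  have dK1: "v.dim {x\<in>C1. d1 x = 0} = 0" and eq3: "v.dim (d1 ` C2) = v.dim C3"
    using rn1 rn2 dims le by linarith+
  have K1: "\<And>x. x \<in> C1 \<Longrightarrow> d1 x = 0 \<Longrightarrow> x = 0"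
  proof -
    fix x assume x: "x \<in> C1" "d1 x = 0"
    obtain BK where BK: "BK \<subseteq> {x\<in>C1. d1 x = 0}" "v.independent BK"
        "{x\<in>C1. d1 x = 0} \<subseteq> v.span BK" "card BK = v.dim {x\<in>C1. d1 x = 0}"
      by (rule v.basis_exists)
    have "finite BK" using v.indep_card_le[of B1 C1 BK] S1 BK by auto
    then have "BK = {}" using BK(4) dK1 by simp
    then show "x = 0" using BK(3) x by auto
  qed
  have surj3: "C3 \<subseteq> d1 ` C2"
  proof
    fix w assume w: "w \<in> C3"
    have "w \<in> v.span BB"
    proof (rule ccontr)
      assume nw: "w \<notin> v.span BB"
      then have "v.independent (insert w BB)" using v.independent_insertI BB(2) by auto
      then have "card (insert w BB) \<le> v.dim C3"
        using v.indep_card_le[of B3 C3 "insert w BB"] S3 BBC3 w by auto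
      moreover have "w \<notin> BB" using nw v.span_superset by auto
      ultimately show False using fBB BB(4) eq3 by simp
    qed
    moreover have "v.span BB \<subseteq> d1 ` C2"
      using v.span_minimal[OF BB(1) l1.subspace_image[OF S2(1)]] .
    ultimately show "w \<in> d1 ` C2" by auto
  qed
  show ?thesis unfolding homology_trivial_def
  proof (intro ballI impI)
    fix x assume x: "x \<in> direct_sum3 C1 C2 C3" "d1 x = 0"
    then obtain x1 x2 x3 where xx: "x = x1 + x2 + x3" "x1 \<in> C1" "x2 \<in> C2" "x3 \<in> C3"
      unfolding direct_sum3_def by blast
    have "0 + d1 x1 + d1 x2 = 0" using x(2) xx l1.add d1C3 by simp
    moreover have "d1 x1 \<in> C2" "d1 x2 \<in> C3" using xx d1_C1 d1_C2 by auto
    ultimately have a: "d1 x1 = 0" "d1 x2 = 0" using indep z1 unfolding independent3_def by blast+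
    have x10: "x1 = 0" using K1 xx(2) a(1) .
    obtain y1 where y1: "y1 \<in> C1" "d1 y1 = x2" using ex2 xx(3) a(2) by blast
    obtain y2 where y2: "y2 \<in> C2" "d1 y2 = x3" using surj3 xx(4) by blast
    have "y1 + y2 + 0 \<in> direct_sum3 C1 C2 C3" unfolding direct_sum3_def using y1 y2 z3 by blast
    moreover have "d1 (y1 + y2 + 0) = x" using y1 y2 xx x10 l1.add by simp
    ultimately show "\<exists>y\<in>direct_sum3 C1 C2 C3. d1 y = x" by blast
  qed
qed

end
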